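(* Let $c>0$ and $\alpha,\beta\in\mathbb{R}$. For all $x\ge c$, $$\int_c^x\frac{dy}{y^{\alpha}(x+c-y)^{\beta}}=\Big\{\frac{1}{c(x+c)}\Big\}^{\alpha+\beta-1}\int_c^x (y+c)^{\alpha+\beta-2}\Big(\frac{c^{\alpha}}{y^{\alpha}}+\frac{c^{\beta}}{y^{\beta}}\Big)dy.$$ *)

theory Defs
  imports "HOL-Analysis.Analysis"
begin

end

theory Submission
  imports Defs
begin

lemma X:
  fixes c \<alpha> \<beta> x t P :: real
  assumes "c > 0" "t \<ge> c" "P > 0"
  shows "(-(c*P)/(t+c)^2) * (1 / ((c*P/(t+c)) powr \<alpha> * (P - c*P/(t+c)) powr \<beta>))
     = - ((1 / (c * P)) powr (\<alpha> + \<beta> - 1) * ((t+c) powr (\<alpha>+\<beta>-2) * (c powr \<beta> / t powr \<beta>)))"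
proof -
  have t: "t > 0" "t + c > 0" using assms by auto
  have e1: "P - c*P/(t+c) = P*t/(t+c)" using t by (simp add: field_simps)
  have p1: "(c*P/(t+c)) powr \<alpha> = c powr \<alpha> * P powr \<alpha> / (t+c) powr \<alpha>"
    using assms t by (simp add: powr_divide powr_mult)
  have p2: "(P*t/(t+c)) powr \<beta> = P powr \<beta> * t powr \<beta> / (t+c) powr \<beta>"
    using assms t by (simp add: powr_divide powr_mult)
  have p3: "(1 / (c * P)) powr (\<alpha> + \<beta> - 1) = c * P / (c powr \<alpha> * c powr \<beta> * P powr \<alpha> * P powr \<beta>)"
    using assms by (simp add: powr_divide powr_mult powr_add powr_diff powr_minus_divide field_simps)
  have p4: "(t+c) powr (\<alpha>+\<beta>-2) = (t+c) powr \<alpha> * (t+c) powr \<beta> / (t+c)^2"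
    using t by (simp add: powr_add powr_diff)
  show ?thesis unfolding e1 p1 p2 p3 p4 using assms t
    by (simp add: field_simps powr_add power2_eq_square)
qed
lemma Y:
  fixes c \<alpha> \<beta> x t P :: real
  assumes "c > 0" "t \<ge> c" "P > 0"
  shows "(P*c/(t+c)^2) * (1 / ((P*t/(t+c)) powr \<alpha> * (P - P*t/(t+c)) powr \<beta>))
     = ((1 / (c * P)) powr (\<alpha> + \<beta> - 1) * ((t+c) powr (\<alpha>+\<beta>-2) * (c powr \<alpha> / t powr \<alpha>)))"
proof -
  have t: "t > 0" "t + c > 0" using assms by auto
  have e1: "P - P*t/(t+c) = c*P/(t+c)" using t by (simp add: field_simps)
  have p1: "(c*P/(t+c)) powr \<beta> = c powr \<beta> * P powr \<beta> / (t+c) powr \<beta>"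
    using assms t by (simp add: powr_divide powr_mult)
  have p2: "(P*t/(t+c)) powr \<alpha> = P powr \<alpha> * t powr \<alpha> / (t+c) powr \<alpha>"
    using assms t by (simp add: powr_divide powr_mult)
  have p3: "(1 / (c * P)) powr (\<alpha> + \<beta> - 1) = c * P / (c powr \<alpha> * c powr \<beta> * P powr \<alpha> * P powr \<beta>)"
    using assms by (simp add: powr_divide powr_mult powr_add powr_diff powr_minus_divide field_simps)
  have p4: "(t+c) powr (\<alpha>+\<beta>-2) = (t+c) powr \<alpha> * (t+c) powr \<beta> / (t+c)^2"
    using t by (simp add: powr_add powr_diff)
  show ?thesis unfolding e1 p1 p2 p3 p4 using assms t
    by (simp add: field_simps powr_add power2_eq_square)
qed

theorem lemmaA1:
  fixes c \<alpha> \<beta> x :: real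
  assumes "c > 0" and "x \<ge> c"
  shows "integral {c..x} (\<lambda>y. 1 / (y powr \<alpha> * (x + c - y) powr \<beta>))
       = (1 / (c * (x + c))) powr (\<alpha> + \<beta> - 1) *
         integral {c..x} (\<lambda>y. (y + c) powr (\<alpha> + \<beta> - 2) *
                              (c powr \<alpha> / y powr \<alpha> + c powr \<beta> / y powr \<beta>))"
proof -
  define P where "P = x + c"
  define m where "m = P / 2"
  define F where "F = (\<lambda>y. 1 / (y powr \<alpha> * (x + c - y) powr \<beta>))"
  define K where "K = (1 / (c * P)) powr (\<alpha> + \<beta> - 1)"
  have P: "P > 0" using assms unfolding P_def by auto
  have cm: "c \<le> m" "m \<le> x" using assms unfolding m_def P_def by auto
  have contF: "continuous_on {c..x} F" unfolding F_def
    using assms by (intro continuous_intros) auto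
  have split: "integral {c..x} F = integral {c..m} F + integral {m..x} F"
    using Henstock_Kurzweil_Integration.integral_combine[OF cm integrable_continuous_real[OF contF]] by simp
  have A0: "((\<lambda>t. (-(c*P)/(t+c)^2) *\<^sub>R F (c*P/(t+c))) has_integral
      (integral {c*P/(c+c)..c*P/(x+c)} F - integral {c*P/(x+c)..c*P/(c+c)} F)) {c..x}"
  proof (rule has_integral_substitution_general[of "{}" c x _ c x])
    show "(\<lambda>t. c*P/(t+c)) ` {c..x} \<subseteq> {c..x}"
    proof
      fix y assume "y \<in> (\<lambda>t. c*P/(t+c)) ` {c..x}"
      then obtain t where t: "t \<in> {c..x}" "y = c*P/(t+c)" by auto
      have "c*P/(t+c) \<ge> c*P/(x+c)" using t assms P by (intro divide_left_mono) auto
      moreover have "c*P/(t+c) \<le> c*P/(c+c)" using t assms P by (intro divide_left_mono) auto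
      moreover have "c*P/(x+c) = c" "c*P/(c+c) = m" using assms P unfolding P_def m_def by (auto simp: field_simps)
      ultimately show "y \<in> {c..x}" using t cm by auto
    qed
    show "continuous_on {c..x} (\<lambda>t. c*P/(t+c))" using assms by (intro continuous_intros) auto
    fix t assume "t \<in> {c..x} - {}"
    then have "t + c \<noteq> 0" using assms by auto
    then show "((\<lambda>t. c*P/(t+c)) has_field_derivative (-(c*P)/(t+c)^2)) (at t within {c..x})"
      by (auto intro!: derivative_eq_intros simp: power2_eq_square)
  qed (use assms contF in auto)
  have "c*P/(c+c) = m" "c*P/(x+c) = c" using assms P unfolding m_def P_def by (auto simp: field_simps)
  moreover have "integral {m..c} F = 0"
    using cm by (cases "m = c") auto
  ultimately have A1: "((\<lambda>t. (-(c*P)/(t+c)^2) * F (c*P/(t+c))) has_integral - integral {c..m} F) {c..x}"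
    using A0 by simp
  have A: "((\<lambda>t. K * ((t+c) powr (\<alpha>+\<beta>-2) * (c powr \<beta> / t powr \<beta>))) has_integral integral {c..m} F) {c..x}"
  proof -
    have "((\<lambda>t. - ((-(c*P)/(t+c)^2) * F (c*P/(t+c)))) has_integral integral {c..m} F) {c..x}"
      using has_integral_neg[OF A1] by simp
    then show ?thesis
    proof (rule has_integral_eq[rotated])
      fix t assume "t \<in> {c..x}"
      then show "- ((-(c*P)/(t+c)^2) * F (c*P/(t+c))) = K * ((t+c) powr (\<alpha>+\<beta>-2) * (c powr \<beta> / t powr \<beta>))"
        using X[of c t P \<alpha> \<beta>] assms P unfolding F_def K_def P_def by auto
    qed
  qed
  have B0: "((\<lambda>t. (P*c/(t+c)^2) *\<^sub>R F (P*t/(t+c))) has_integral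
      (integral {P*c/(c+c)..P*x/(x+c)} F)) {c..x}"
  proof (rule has_integral_substitution[of c x _ c x])
    show "P*c/(c+c) \<le> P*x/(x+c)" using assms P unfolding P_def by (auto simp: field_simps intro: mult_mono)
    show "(\<lambda>t. P*t/(t+c)) ` {c..x} \<subseteq> {c..x}"
    proof
      fix y assume "y \<in> (\<lambda>t. P*t/(t+c)) ` {c..x}"
      then obtain t where t: "t \<in> {c..x}" "y = P*t/(t+c)" by auto
      have "P*t \<le> x * (t+c)" "c * (t+c) \<le> P*t" using t assms unfolding P_def
        by (auto simp: algebra_simps intro: mult_left_mono mult_mono)
      moreover have "t + c > 0" using t assms by auto
      ultimately show "y \<in> {c..x}" using t
        by (auto simp: pos_le_divide_eq pos_divide_le_eq)
    qed
    fix t assume "t \<in> {c..x}"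
    then have "t + c \<noteq> 0" using assms by auto
    then show "((\<lambda>t. P*t/(t+c)) has_field_derivative (P*c/(t+c)^2)) (at t within {c..x})"
      by (auto intro!: derivative_eq_intros simp: power2_eq_square field_simps)
  qed (use assms contF in auto)
  have "P*c/(c+c) = m" "P*x/(x+c) = x" using assms P unfolding m_def P_def by (auto simp: field_simps)
  then have B1: "((\<lambda>t. (P*c/(t+c)^2) * F (P*t/(t+c))) has_integral integral {m..x} F) {c..x}"
    using B0 by simp
  have B: "((\<lambda>t. K * ((t+c) powr (\<alpha>+\<beta>-2) * (c powr \<alpha> / t powr \<alpha>))) has_integral integral {m..x} F) {c..x}"
    using B1
  proof (rule has_integral_eq[rotated])
    fix t assume "t \<in> {c..x}"
    then show "(P*c/(t+c)^2) * F (P*t/(t+c)) = K * ((t+c) powr (\<alpha>+\<beta>-2) * (c powr \<alpha> / t powr \<alpha>))"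
      using Y[of c t P \<alpha> \<beta>] assms P unfolding F_def K_def P_def by auto
  qed
  have "((\<lambda>t. K * ((t + c) powr (\<alpha> + \<beta> - 2) *
           (c powr \<alpha> / t powr \<alpha> + c powr \<beta> / t powr \<beta>))) has_integral
         (integral {c..m} F + integral {m..x} F)) {c..x}"
    using has_integral_add[OF B A] by (simp add: algebra_simps)
  then have "integral {c..x} (\<lambda>t. K * ((t + c) powr (\<alpha> + \<beta> - 2) *
           (c powr \<alpha> / t powr \<alpha> + c powr \<beta> / t powr \<beta>))) = integral {c..x} F"
    using split integral_unique by (metis (no_types, lifting))
  then show ?thesis unfolding F_def K_def P_def by simp
qed

end
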